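(* Let $G=H\rtimes\mathbb{Z}$ be a group with finite generating set $(X,\pi)$, where $H$ is the normal factor, and let $f\colon G\to\mathbb{Z}$ be the projection with kernel $H$. Let $\prec$ be a left-order on $G$ which is lexicographic led by $\mathbb{Z}$, i.e. whose positive cone is $f^{-1}(P_{\mathbb{Z}})\cup P_H$ for some positive cone $P_{\mathbb{Z}}$ of $\mathbb{Z}$ and some positive cone $P_H$ of $H$, and let $\mathcal{L}\subseteq X^*$ be a regular language with $\pi(\mathcal{L})$ equal to the positive cone of $\prec$. If $H$ is finitely generated, then $H$ is language-convex with respect to $\mathcal{L}$. In particular, the restriction of $\prec$ to $H$ is a regular left-order.
   Context: A finite generating set of $G$ is a finite set $X$ with a surjective monoid homomorphism $\pi\colon X^*\to G$; $\mathrm{dist}$ denotes the word metric on $G$ with respect to $X$. A positive cone of a group $K$ is a subsemigroup $P$ with $K=P\sqcup P^{-1}\sqcup\{1\}$. A subset $H\subseteq G$ is language-convex with respect to a language $\mathcal{L}\subseteq X^*$ if there is $R\ge0$ such that for every $w=x_1\cdots x_n\in\mathcal{L}$ with $\pi(w)\in H$, every prefix $w_i=x_1\cdots x_i$ satisfies $\mathrm{dist}(\pi(w_i),H)\le R$. A left-order on a finitely generated group $K$ is regular if there is a finite generating set $(Y,\pi_K)$ of $K$ and a regular language $\mathcal{M}\subseteq Y^*$ with $\pi_K(\mathcal{M})$ equal to its positive cone. *)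

theory Defs
  imports "HOL-Algebra.Algebra"
begin

definition word_eval :: "('a, 'b) monoid_scheme \<Rightarrow> ('x \<Rightarrow> 'a) \<Rightarrow> 'x list \<Rightarrow> 'a" where
  "word_eval GG lab w = foldr (\<lambda>x a. lab x \<otimes>\<^bsub>GG\<^esub> a) w \<one>\<^bsub>GG\<^esub>"

(* (A, pi) is a finite generating set of GG, with pi = word_eval GG lab *)
definition fin_gen_set :: "('a, 'b) monoid_scheme \<Rightarrow> 'x set \<Rightarrow> ('x \<Rightarrow> 'a) \<Rightarrow> bool" where
  "fin_gen_set GG A lab \<longleftrightarrow> finite A \<and> lab ` A \<subseteq> carrier GG
     \<and> word_eval GG lab ` lists A = carrier GG"

definition word_dist :: "('a, 'b) monoid_scheme \<Rightarrow> 'x set \<Rightarrow> ('x \<Rightarrow> 'a) \<Rightarrow> 'a \<Rightarrow> 'a \<Rightarrow> nat" where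
  "word_dist GG A lab g h = (LEAST n. \<exists>w \<in> lists (lab ` A \<union> m_inv GG ` lab ` A).
      length w = n \<and> foldr (\<otimes>\<^bsub>GG\<^esub>) w \<one>\<^bsub>GG\<^esub> = inv\<^bsub>GG\<^esub> g \<otimes>\<^bsub>GG\<^esub> h)"

definition regular_lang :: "'x set \<Rightarrow> 'x list set \<Rightarrow> bool" where
  "regular_lang A L \<longleftrightarrow> (\<exists>(Q :: nat set) q0 (\<delta> :: nat \<Rightarrow> 'x \<Rightarrow> nat) F.
      finite Q \<and> q0 \<in> Q \<and> (\<forall>q\<in>Q. \<forall>x\<in>A. \<delta> q x \<in> Q) \<and> F \<subseteq> Q \<and>
      L = {w \<in> lists A. foldl \<delta> q0 w \<in> F})"

definition positive_cone :: "('a, 'b) monoid_scheme \<Rightarrow> 'a set \<Rightarrow> bool" where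
  "positive_cone KK P \<longleftrightarrow> P \<subseteq> carrier KK
     \<and> (\<forall>a\<in>P. \<forall>b\<in>P. a \<otimes>\<^bsub>KK\<^esub> b \<in> P)
     \<and> carrier KK = P \<union> m_inv KK ` P \<union> {\<one>\<^bsub>KK\<^esub>}
     \<and> P \<inter> m_inv KK ` P = {} \<and> \<one>\<^bsub>KK\<^esub> \<notin> P \<and> \<one>\<^bsub>KK\<^esub> \<notin> m_inv KK ` P"

definition language_convex :: "('a, 'b) monoid_scheme \<Rightarrow> 'x set \<Rightarrow> ('x \<Rightarrow> 'a) \<Rightarrow> 'x list set \<Rightarrow> 'a set \<Rightarrow> bool" where
  "language_convex GG A lab L H \<longleftrightarrow> (\<exists>R::real. R \<ge> 0 \<and>
     (\<forall>w\<in>L. word_eval GG lab w \<in> H \<longrightarrow>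
        (\<forall>i \<le> length w. \<exists>h\<in>H. real (word_dist GG A lab (word_eval GG lab (take i w)) h) \<le> R)))"

definition regular_left_order :: "('a, 'b) monoid_scheme \<Rightarrow> 'a set \<Rightarrow> bool" where
  "regular_left_order KK P \<longleftrightarrow> (\<exists>(Y :: 'a set) (lab :: 'a \<Rightarrow> 'a) M.
     fin_gen_set KK Y lab \<and> regular_lang Y M \<and> word_eval KK lab ` M = P)"

end

theory Submission
  imports Defs
begin


lemma reg_of_dfa:
  fixes Q :: "'s set" and \<delta> :: "'s \<Rightarrow> 'x \<Rightarrow> 's"
  assumes "finite Q" "q0 \<in> Q" "\<forall>q\<in>Q. \<forall>x\<in>A. \<delta> q x \<in> Q" "F \<subseteq> Q"
    and "L = {w \<in> lists A. foldl \<delta> q0 w \<in> F}"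
  shows "regular_lang A L"
proof -
  obtain g :: "'s \<Rightarrow> nat" and n where "g ` Q = {i. i < n} \<and> inj_on g Q"
    using finite_imp_inj_to_nat_seg[OF assms(1)] by auto
  then have g: "inj_on g Q" by simp
  define d where "d n x = g (\<delta> (inv_into Q g n) x)" for n x
  have fo: "foldl d (g q) w = g (foldl \<delta> q w)" if "w \<in> lists A" "q \<in> Q" for w q
    using that
  proof (induction w arbitrary: q)
    case Nil then show ?case by simp
  next
    case (Cons x w)
    have "d (g q) x = g (\<delta> q x)" using Cons.prems g(1) by (simp add: d_def inv_into_f_f)
    moreover have "\<delta> q x \<in> Q" using Cons assms(3) by auto
    ultimately show ?case using Cons by simp
  qed
  have inQ: "foldl \<delta> q w \<in> Q" if "w \<in> lists A" "q \<in> Q" for w q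
    using that
  proof (induction w arbitrary: q)
    case (Cons x w)
    then have "\<delta> q x \<in> Q" using assms(3) by simp
    then show ?case using Cons by simp
  qed simp
  have "L = {w \<in> lists A. foldl d (g q0) w \<in> g ` F}"
    unfolding assms(5)
  proof (intro Collect_cong conj_cong refl)
    fix w assume w: "w \<in> lists A"
    show "(foldl \<delta> q0 w \<in> F) = (foldl d (g q0) w \<in> g ` F)"
      using fo[OF w assms(2)] inQ[OF w assms(2)] assms(4) g(1)
      by (simp add: inj_on_image_mem_iff[OF g(1)] subset_iff)
  qed
  moreover have "finite (g ` Q)" using assms(1) by simp
  moreover have "\<forall>q\<in>g ` Q. \<forall>x\<in>A. d q x \<in> g ` Q"
  proof (intro ballI)
    fix q x assume "q \<in> g ` Q" "x \<in> A"
    then have "inv_into Q g q \<in> Q" by (simp add: inv_into_into)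
    then have "\<delta> (inv_into Q g q) x \<in> Q" using assms(3) \<open>x \<in> A\<close> by blast
    then show "d q x \<in> g ` Q" unfolding d_def by (rule imageI)
  qed
  moreover have "g q0 \<in> g ` Q" "g ` F \<subseteq> g ` Q" using assms(2,4) by auto
  ultimately show ?thesis unfolding regular_lang_def
    by (intro exI[of _ "g ` Q"] exI[of _ "g q0"] exI[of _ d] exI[of _ "g ` F"]) simp
qed

lemma pigeon_bound:
  fixes h :: "nat \<Rightarrow> int" and st :: "nat \<Rightarrow> 's"
  assumes "finite Q" "\<forall>k\<le>n. st k \<in> Q" "h 0 = 0" "C \<ge> 1"
    and "\<forall>k<n. \<bar>h (Suc k) - h k\<bar> \<le> C"
    and "\<forall>j j'. j < j' \<and> j' \<le> n \<and> st j = st j' \<longrightarrow> h j = h j'"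
    and "i \<le> n"
  shows "h i \<le> int (card Q) * C"
proof (rule ccontr)
  assume big: "\<not> h i \<le> int (card Q) * C"
  define N where "N = card Q"
  define t where "t m = (LEAST k. h k > int m * C)" for m :: nat
  have ex: "h (t m) > int m * C \<and> t m \<le> i" if "m \<le> N" for m
  proof -
    have "h i > int m * C" using big that assms(4) unfolding N_def
      by (smt (verit) mult_right_mono of_nat_mono)
    then show ?thesis unfolding t_def by (meson LeastI Least_le)
  qed
  have up: "h (t m) \<le> int (Suc m) * C" if "m \<le> N" for m
  proof -
    have "int m * C \<ge> 0" using assms(4) by simp
    then have "t m \<noteq> 0" using ex[OF that] assms(3) by (metis not_less)
    then obtain k where k: "t m = Suc k" by (cases "t m") auto
    have "\<not> h k > int m * C" using k unfolding t_def
      by (metis Suc_n_not_le_n not_less_Least k t_def lessI)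
    moreover have "k < n" using ex[OF that] k assms(7) by simp
    ultimately show ?thesis using assms(5) k by (auto simp: algebra_simps)
  qed
  have mono: "h (t m) < h (t m')" if "m < m'" "m' \<le> N" for m m'
  proof -
    have a: "h (t m) \<le> int (Suc m) * C" using up that by simp
    have b: "int (Suc m) * C \<le> int m' * C" using that assms(4) by (intro mult_right_mono) auto
    have c: "int m' * C < h (t m')" using ex that by simp
    show ?thesis using a b c by linarith
  qed
  have tle: "t m \<le> t m'" if "m < m'" "m' \<le> N" for m m'
  proof -
    have "h (t m') > int m * C" using ex[OF that(2)] that assms(4)
      by (smt (verit) mult_right_mono of_nat_mono less_imp_le)
    then show ?thesis unfolding t_def by (rule Least_le)
  qed
  have "\<not> inj_on (st \<circ> t) {..N}"
  proof
    assume "inj_on (st \<circ> t) {..N}"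
    then have "card {..N} \<le> card Q"
      proof (rule card_inj_on_le)
      show "(st \<circ> t) ` {..N} \<subseteq> Q"
      proof
        fix y assume "y \<in> (st \<circ> t) ` {..N}"
        then obtain m where "m \<le> N" "y = st (t m)" by auto
        moreover have "t m \<le> n" using ex[OF \<open>m \<le> N\<close>] assms(7) by linarith
        ultimately show "y \<in> Q" using assms(2) by blast
      qed
    qed (use assms(1) in auto)
    then show False by (simp add: N_def)
  qed
  then obtain m m' where mm: "m \<le> N" "m' \<le> N" "m \<noteq> m'" "st (t m) = st (t m')"
    unfolding inj_on_def by auto
  show False
  proof (cases "m < m'")
    case True
    have "t m < t m'" using tle[OF True mm(2)] mono[OF True mm(2)] by (cases "t m = t m'") auto
    moreover have "t m' \<le> n" using ex[OF mm(2)] assms(7) by linarith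
    ultimately have "h (t m) = h (t m')" using assms(6) mm(4) by blast
    then show False using mono[OF True mm(2)] by simp
  next
    case False
    then have F: "m' < m" using mm by simp
    have "t m' < t m" using tle[OF F mm(1)] mono[OF F mm(1)] by (cases "t m = t m'") auto
    moreover have "t m \<le> n" using ex[OF mm(1)] assms(7) by linarith
    ultimately have "h (t m') = h (t m)" using assms(6) mm(4) by metis
    then show False using mono[OF F mm(1)] by simp
  qed
qed



lemma foldl_inQ:
  assumes "\<forall>q\<in>Q. \<forall>x\<in>A. \<delta> q x \<in> Q" "w \<in> lists A" "q \<in> Q"
  shows "foldl \<delta> q w \<in> Q"
  using assms(2,3)
proof (induction w arbitrary: q)
  case (Cons x w)
  then have "\<delta> q x \<in> Q" using assms(1) by simp
  then show ?case using Cons by simp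
qed simp

lemma word_eval_Nil [simp]: "word_eval G lab [] = \<one>\<^bsub>G\<^esub>"
  by (simp add: word_eval_def)

lemma word_eval_Cons [simp]: "word_eval G lab (x # w) = lab x \<otimes>\<^bsub>G\<^esub> word_eval G lab w"
  by (simp add: word_eval_def)

lemma word_eval_closed:
  assumes "monoid G" "\<forall>x\<in>set w. lab x \<in> carrier G"
  shows "word_eval G lab w \<in> carrier G"
  using assms(2) by (induction w) (auto intro: monoid.m_closed[OF assms(1)] monoid.one_closed[OF assms(1)])

lemma word_eval_append:
  assumes "monoid G" "\<forall>x\<in>set u. lab x \<in> carrier G" "\<forall>x\<in>set v. lab x \<in> carrier G"
  shows "word_eval G lab (u @ v) = word_eval G lab u \<otimes>\<^bsub>G\<^esub> word_eval G lab v"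
  using assms(2)
proof (induction u)
  case Nil
  then show ?case using word_eval_closed[OF assms(1,3)] by (simp add: monoid.l_one[OF assms(1)])
next
  case (Cons x u)
  then show ?case using word_eval_closed[OF assms(1,3)] word_eval_closed[OF assms(1), of u lab]
    by (simp add: monoid.m_assoc[OF assms(1)])
qed

lemma word_eval_replicate:
  assumes "monoid G" "\<forall>x\<in>set w. lab x \<in> carrier G"
  shows "word_eval G lab (concat (replicate n w)) = word_eval G lab w [^]\<^bsub>G\<^esub> n"
proof (induction n)
  case 0 then show ?case by simp
next
  case (Suc n)
  have "word_eval G lab (concat (replicate (Suc n) w)) = word_eval G lab w \<otimes>\<^bsub>G\<^esub> word_eval G lab (concat (replicate n w))"
    using assms by (simp add: word_eval_append)
  also have "\<dots> = word_eval G lab w \<otimes>\<^bsub>G\<^esub> (word_eval G lab w [^]\<^bsub>G\<^esub> n)" using Suc by simp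
  also have "\<dots> = word_eval G lab w [^]\<^bsub>G\<^esub> Suc n"
    using monoid.nat_pow_Suc2[OF assms(1) word_eval_closed[OF assms]] by simp
  finally show ?case .
qed

lemma foldr_map_lab: "foldr (\<otimes>\<^bsub>G\<^esub>) (map lab w) \<one>\<^bsub>G\<^esub> = word_eval G lab w"
  by (induction w) auto

lemma word_dist_le:
  assumes "w \<in> lists A" "word_eval G lab w = inv\<^bsub>G\<^esub> g \<otimes>\<^bsub>G\<^esub> h"
  shows "word_dist G A lab g h \<le> length w"
  unfolding word_dist_def
proof (rule Least_le)
  show "\<exists>wa\<in>lists (lab ` A \<union> m_inv G ` lab ` A). length wa = length w \<and>
        foldr (\<otimes>\<^bsub>G\<^esub>) wa \<one>\<^bsub>G\<^esub> = inv\<^bsub>G\<^esub> g \<otimes>\<^bsub>G\<^esub> h"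
    using assms by (intro bexI[of _ "map lab w"]) (auto simp: foldr_map_lab)
qed

lemma word_dist_witness:
  assumes "group G" "fin_gen_set G A lab" "g \<in> carrier G" "h \<in> carrier G"
  shows "\<exists>l\<in>lists (lab ` A \<union> m_inv G ` lab ` A). length l = word_dist G A lab g h \<and>
        foldr (\<otimes>\<^bsub>G\<^esub>) l \<one>\<^bsub>G\<^esub> = inv\<^bsub>G\<^esub> g \<otimes>\<^bsub>G\<^esub> h"
proof -
  have "inv\<^bsub>G\<^esub> g \<otimes>\<^bsub>G\<^esub> h \<in> carrier G" using assms by (simp add: group.inv_closed monoid.m_closed group.is_monoid)
  then obtain w where w: "w \<in> lists A" "word_eval G lab w = inv\<^bsub>G\<^esub> g \<otimes>\<^bsub>G\<^esub> h"
    using assms(2) unfolding fin_gen_set_def by (metis imageE)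
  have "\<exists>n. \<exists>l\<in>lists (lab ` A \<union> m_inv G ` lab ` A). length l = n \<and>
        foldr (\<otimes>\<^bsub>G\<^esub>) l \<one>\<^bsub>G\<^esub> = inv\<^bsub>G\<^esub> g \<otimes>\<^bsub>G\<^esub> h"
    using w by (intro exI[of _ "length w"] bexI[of _ "map lab w"]) (auto simp: foldr_map_lab)
  then show ?thesis unfolding word_dist_def by (rule LeastI_ex)
qed



lemma bound_f:
  fixes s :: int
  assumes G: "group G" and labA: "\<forall>x\<in>A. lab x \<in> carrier G"
    and fA: "finite A"
    and hom: "f \<in> hom G integer_group" and reg: "regular_lang A L"
    and nonneg: "\<forall>w\<in>L. s * f (word_eval G lab w) \<ge> 0"
  shows "\<exists>K::int. \<forall>w\<in>L. f (word_eval G lab w) = 0 \<longrightarrow>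
           (\<forall>i\<le>length w. \<bar>s * f (word_eval G lab (take i w))\<bar> \<le> K)"
proof -
  obtain Q :: "nat set" and q0 \<delta> F where dfa: "finite Q" "q0 \<in> Q" "\<forall>q\<in>Q. \<forall>x\<in>A. \<delta> q x \<in> Q"
    "F \<subseteq> Q" "L = {w \<in> lists A. foldl \<delta> q0 w \<in> F}"
    using reg unfolding regular_lang_def by blast
  have M: "monoid G" using G by (simp add: group.is_monoid)
  define phi where "phi w = s * f (word_eval G lab w)" for w
  define C where "C = 1 + (\<Sum>x\<in>A. \<bar>s * f (lab x)\<bar>)"
  have C1: "C \<ge> 1" unfolding C_def by (simp add: sum_nonneg)
  have fmult: "f (a \<otimes>\<^bsub>G\<^esub> b) = f a + f b" if "a \<in> carrier G" "b \<in> carrier G" for a b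
    using hom that unfolding hom_def by simp
  have phi_app: "phi (u @ v) = phi u + phi v" if "u \<in> lists A" "v \<in> lists A" for u v
  proof -
    have "\<forall>x\<in>set u. lab x \<in> carrier G" "\<forall>x\<in>set v. lab x \<in> carrier G" using that labA by auto
    then show ?thesis unfolding phi_def
      by (simp add: word_eval_append[OF M] fmult word_eval_closed[OF M] algebra_simps)
  qed
  have phi_nil: "phi [] = 0"
  proof -
    have "group_hom G integer_group f" using G hom by (simp add: group_hom_def group_hom_axioms_def)
    then have "f \<one>\<^bsub>G\<^esub> = 0" using group_hom.hom_one by fastforce
    then show ?thesis by (simp add: phi_def)
  qed
  have phi_one: "\<bar>phi [x]\<bar> \<le> C" if "x \<in> A" for x
  proof -
    have "phi [x] = s * f (lab x)" unfolding phi_def using labA that M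
      by (simp add: monoid.r_one)
    moreover have "\<bar>s * f (lab x)\<bar> \<le> (\<Sum>x\<in>A. \<bar>s * f (lab x)\<bar>)"
      using that fA by (intro member_le_sum) auto
    ultimately show ?thesis unfolding C_def by simp
  qed
  have main: "\<bar>phi (take i w)\<bar> \<le> int (card Q) * C"
    if w: "w \<in> L" "f (word_eval G lab w) = 0" and i: "i \<le> length w" for w i
  proof -
    have wA: "w \<in> lists A" using w dfa(5) by simp
    have phiw: "phi w = 0" using w(2) by (simp add: phi_def)
    define st where "st k = foldl \<delta> q0 (take k w)" for k
    define h where "h k = phi (take k w)" for k
    have tA: "take k w \<in> lists A" for k using wA by (meson in_lists_conv_set in_set_takeD)
    have stQ: "\<forall>k\<le>length w. st k \<in> Q" unfolding st_def using foldl_inQ[OF dfa(3) tA dfa(2)] by blast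
    have h0: "h 0 = 0" unfolding h_def using phi_nil by simp
    have step: "\<forall>k<length w. \<bar>h (Suc k) - h k\<bar> \<le> C"
    proof (intro allI impI)
      fix k assume k: "k < length w"
      have "take (Suc k) w = take k w @ [w ! k]" using k by (simp add: take_Suc_conv_app_nth)
      moreover have "w ! k \<in> A" using wA k by (simp add: in_lists_conv_set)
      ultimately have "h (Suc k) = h k + phi [w ! k]" unfolding h_def using phi_app tA by simp
      then show "\<bar>h (Suc k) - h k\<bar> \<le> C" using phi_one \<open>w ! k \<in> A\<close> by simp
    qed
    have loops: "\<forall>j j'. j < j' \<and> j' \<le> length w \<and> st j = st j' \<longrightarrow> h j = h j'"
    proof (intro allI impI)
      fix j j' assume jj: "j < j' \<and> j' \<le> length w \<and> st j = st j'"
      define u where "u = take j w"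
      define v where "v = drop j (take j' w)"
      define z where "z = drop j' w"
      have tj': "take j' w = u @ v" unfolding u_def v_def using jj
        by (metis append_take_drop_id min.absorb1 less_imp_le take_take)
      have wuvz: "w = u @ v @ z" using tj' unfolding z_def by (metis append.assoc append_take_drop_id)
      have uA: "u \<in> lists A" and vA: "v \<in> lists A" and zA: "z \<in> lists A"
        using wA wuvz by (metis append_in_lists_conv)+
      have stj: "foldl \<delta> q0 u = st j" unfolding st_def u_def by simp
      have stj': "foldl \<delta> q0 (u @ v) = st j'" unfolding st_def using tj' by simp
      have fw: "foldl \<delta> q0 w \<in> F" using w dfa(5) by simp
      have "foldl \<delta> q0 (u @ z) = foldl \<delta> q0 w"
        using stj stj' jj wuvz by (metis foldl_append append.assoc)
      then have uz: "u @ z \<in> L" using fw uA zA dfa(5) by simp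
      have "foldl \<delta> q0 (u @ v @ v @ z) = foldl \<delta> (foldl \<delta> q0 (u @ v)) (v @ z)"
        by simp
      also have "\<dots> = foldl \<delta> (foldl \<delta> q0 u) (v @ z)" using stj stj' jj by simp
      also have "\<dots> = foldl \<delta> q0 w" using wuvz by simp
      finally have uvvz: "u @ v @ v @ z \<in> L" using fw uA vA zA dfa(5) by simp
      have "phi (u @ z) \<ge> 0" using nonneg uz unfolding phi_def by blast
      moreover have "phi (u @ v @ v @ z) \<ge> 0" using nonneg uvvz unfolding phi_def by blast
      moreover have "phi w = phi u + phi v + phi z" using wuvz phi_app uA vA zA by simp
      ultimately have "phi v = 0" using phiw phi_app uA vA zA by simp
      then show "h j = h j'" unfolding h_def using tj' phi_app uA vA u_def by simp
    qed
    have a: "h i \<le> int (card Q) * C"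
      by (rule pigeon_bound[OF dfa(1) stQ h0 C1 step loops i])
    have b: "- h i \<le> int (card Q) * C"
      by (rule pigeon_bound[OF dfa(1) stQ, of "\<lambda>k. - h k"]) (use h0 C1 step loops i in auto)
    show ?thesis using a b unfolding h_def by simp
  qed
  show ?thesis using main unfolding phi_def by blast
qed



lemma int_cone_sign:
  assumes "positive_cone integer_group PZ"
  shows "\<exists>s::int. (s = 1 \<or> s = -1) \<and> (\<forall>n\<in>PZ. s * n > 0)"
proof -
  have cl: "\<And>a b. a \<in> PZ \<Longrightarrow> b \<in> PZ \<Longrightarrow> a + b \<in> PZ"
    and un: "UNIV = PZ \<union> uminus ` PZ \<union> {0}"
    and dj: "PZ \<inter> uminus ` PZ = {}" and z: "0 \<notin> PZ"
    using assms unfolding positive_cone_def by auto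
  have "1 \<in> PZ \<or> -1 \<in> PZ"
  proof -
    have "(1::int) \<in> PZ \<union> uminus ` PZ \<union> {0}" using un by blast
    then show ?thesis by (auto simp: image_iff)
  qed
  then obtain s :: int where s: "s = 1 \<or> s = -1" "s \<in> PZ" by blast
  have mult: "int (Suc k) * s \<in> PZ" for k
  proof (induction k)
    case 0 then show ?case using s by simp
  next
    case (Suc k)
    have "int (Suc (Suc k)) * s = int (Suc k) * s + s" by (simp add: algebra_simps)
    then show ?case using cl[OF Suc s(2)] by simp
  qed
  have "s * n > 0" if n: "n \<in> PZ" for n
  proof (rule ccontr)
    assume "\<not> s * n > 0"
    moreover have "n \<noteq> 0" using n z by auto
    ultimately have "s * n < 0" using s(1) by auto
    define k where "k = nat (- (s * n)) - 1"
    have k: "- (s * n) = int (Suc k)" unfolding k_def using \<open>s * n < 0\<close> by simp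
    have "int (Suc k) * s = - n" using k s(1) by auto
    then have "- n \<in> PZ" using mult[of k] by simp
    then have "n \<in> uminus ` PZ" by (metis add.inverse_inverse image_eqI)
    then show False using dj n by blast
  qed
  then show ?thesis using s(1) by blast
qed

lemma conv_core:
  assumes G: "group G" and fg: "fin_gen_set G A lab"
    and hom: "f \<in> hom G integer_group" and surj: "f ` carrier G = UNIV"
    and Hdef: "kernel G integer_group f = H"
    and PZ: "positive_cone integer_group PZ"
    and PHH: "PH \<subseteq> H"
    and Pdef: "P = {g \<in> carrier G. f g \<in> PZ} \<union> PH"
    and reg: "regular_lang A L" and LP: "word_eval G lab ` L = P"
  shows "\<exists>Rn::nat. \<forall>w\<in>L. word_eval G lab w \<in> H \<longrightarrow>
           (\<forall>i\<le>length w. \<exists>h\<in>H. word_dist G A lab (word_eval G lab (take i w)) h \<le> Rn)"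
proof -
  interpret group G by (rule G)
  interpret gh: group_hom G integer_group f using G hom by (simp add: group_hom_def group_hom_axioms_def)
  have Hc: "H = {x \<in> carrier G. f x = 0}" using Hdef unfolding kernel_def by simp
  have labA: "\<forall>x\<in>A. lab x \<in> carrier G" and fA: "finite A" and gen: "word_eval G lab ` lists A = carrier G"
    using fg unfolding fin_gen_set_def by auto
  obtain s :: int where s: "s = 1 \<or> s = -1" "\<forall>n\<in>PZ. s * n > 0" using int_cone_sign[OF PZ] by blast
  have nonneg: "\<forall>w\<in>L. s * f (word_eval G lab w) \<ge> 0"
  proof
    fix w assume "w \<in> L"
    then have "word_eval G lab w \<in> P" using LP by blast
    then consider "f (word_eval G lab w) \<in> PZ" | "word_eval G lab w \<in> H"
      unfolding Pdef using PHH by blast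
    then show "s * f (word_eval G lab w) \<ge> 0"
    proof cases
      case 1 then show ?thesis using s(2) by (simp add: less_imp_le)
    next
      case 2 then show ?thesis using Hc by simp
    qed
  qed
  obtain K where K: "\<forall>w\<in>L. f (word_eval G lab w) = 0 \<longrightarrow>
           (\<forall>i\<le>length w. \<bar>s * f (word_eval G lab (take i w))\<bar> \<le> K)"
    using bound_f[OF G labA fA hom reg nonneg] by blast
  obtain t where t: "t \<in> carrier G" "f t = 1" using surj by (metis UNIV_I imageE)
  have ti: "inv\<^bsub>G\<^esub> t \<in> carrier G" "f (inv\<^bsub>G\<^esub> t) = -1" using t by auto
  obtain wt where wt: "wt \<in> lists A" "word_eval G lab wt = t" using gen t(1) by (metis imageE)
  obtain wti where wti: "wti \<in> lists A" "word_eval G lab wti = inv\<^bsub>G\<^esub> t" using gen ti(1) by (metis imageE)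
  define Rn where "Rn = nat K * (length wt + length wti)"
  have near: "\<exists>h\<in>H. word_dist G A lab g h \<le> Rn" if g: "g \<in> carrier G" "\<bar>f g\<bar> \<le> K" for g
  proof (cases "f g \<ge> 0")
    case True
    define k where "k = nat (f g)"
    define h where "h = g \<otimes>\<^bsub>G\<^esub> (inv\<^bsub>G\<^esub> t [^]\<^bsub>G\<^esub> k)"
    have hc: "h \<in> carrier G" unfolding h_def using g ti by simp
    have "f h = f g + int k * (-1)" unfolding h_def using g ti by (simp add: gh.hom_nat_pow)
    then have "f h = 0" using True k_def by simp
    then have hH: "h \<in> H" using hc Hc by simp
    have "inv\<^bsub>G\<^esub> g \<otimes>\<^bsub>G\<^esub> h = inv\<^bsub>G\<^esub> t [^]\<^bsub>G\<^esub> k" unfolding h_def using g ti by (simp add: m_assoc[symmetric])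
    also have "\<dots> = word_eval G lab (concat (replicate k wti))"
      using word_eval_replicate[OF is_monoid, of wti lab k] wti labA by (auto simp: in_lists_conv_set)
    finally have "word_dist G A lab g h \<le> length (concat (replicate k wti))"
      using wti(1) by (intro word_dist_le) (auto simp: in_lists_conv_set)
    also have "\<dots> = k * length wti" by (simp add: length_concat sum_list_replicate)
    also have "\<dots> \<le> Rn" unfolding Rn_def k_def using g(2) True
      by (intro mult_mono) auto
    finally show ?thesis using hH by blast
  next
    case False
    define k where "k = nat (- f g)"
    define h where "h = g \<otimes>\<^bsub>G\<^esub> (t [^]\<^bsub>G\<^esub> k)"
    have hc: "h \<in> carrier G" unfolding h_def using g t by simp
    have "f h = f g + int k * 1" unfolding h_def using g t by (simp add: gh.hom_nat_pow)
    then have "f h = 0" using False k_def by simp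
    then have hH: "h \<in> H" using hc Hc by simp
    have "inv\<^bsub>G\<^esub> g \<otimes>\<^bsub>G\<^esub> h = t [^]\<^bsub>G\<^esub> k" unfolding h_def using g t by (simp add: m_assoc[symmetric])
    also have "\<dots> = word_eval G lab (concat (replicate k wt))"
      using word_eval_replicate[OF is_monoid, of wt lab k] wt labA by (auto simp: in_lists_conv_set)
    finally have "word_dist G A lab g h \<le> length (concat (replicate k wt))"
      using wt(1) by (intro word_dist_le) (auto simp: in_lists_conv_set)
    also have "\<dots> = k * length wt" by (simp add: length_concat sum_list_replicate)
    also have "\<dots> \<le> Rn" unfolding Rn_def k_def using g(2) False
      by (intro mult_mono) auto
    finally show ?thesis using hH by blast
  qed
  have "\<forall>w\<in>L. word_eval G lab w \<in> H \<longrightarrow>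
           (\<forall>i\<le>length w. \<exists>h\<in>H. word_dist G A lab (word_eval G lab (take i w)) h \<le> Rn)"
  proof (intro ballI impI allI)
    fix w i assume w: "w \<in> L" "word_eval G lab w \<in> H" and i: "i \<le> length w"
    have f0: "f (word_eval G lab w) = 0" using w(2) Hc by simp
    have wA: "w \<in> lists A" using reg w(1) unfolding regular_lang_def by blast
    have gc: "word_eval G lab (take i w) \<in> carrier G"
      using wA labA by (intro word_eval_closed[OF is_monoid]) (auto simp: in_lists_conv_set dest: in_set_takeD)
    have "\<bar>s * f (word_eval G lab (take i w))\<bar> \<le> K" using K w(1) f0 i by blast
    then have "\<bar>f (word_eval G lab (take i w))\<bar> \<le> K" using s(1) by (auto simp: abs_mult)
    then show "\<exists>h\<in>H. word_dist G A lab (word_eval G lab (take i w)) h \<le> Rn" using near gc by blast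
  qed
  then show ?thesis by blast
qed



definition dstep :: "('q \<Rightarrow> 'x \<Rightarrow> 'q) \<Rightarrow> ('q \<times> 'a) option \<Rightarrow> ('x \<times> 'a \<times> 'a) + 'b \<Rightarrow> ('q \<times> 'a) option" where
  "dstep \<delta> st l = (case st of None \<Rightarrow> None | Some (q, c) \<Rightarrow>
     (case l of Inl (x, c1, c2) \<Rightarrow> if c = c1 then Some (\<delta> q x, c2) else None | Inr _ \<Rightarrow> None))"

definition lab0 :: "('a, 'm) monoid_scheme \<Rightarrow> ('x \<Rightarrow> 'a) \<Rightarrow> ('x \<times> 'a \<times> 'a) + 'a \<Rightarrow> 'a" where
  "lab0 G lab l = (case l of Inl (x, c, c') \<Rightarrow> inv\<^bsub>G\<^esub> c \<otimes>\<^bsub>G\<^esub> lab x \<otimes>\<^bsub>G\<^esub> c' | Inr y \<Rightarrow> y)"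

lemma dstep_simps [simp]:
  "dstep \<delta> None l = None"
  "dstep \<delta> (Some (q, c)) (Inr y) = None"
  "dstep \<delta> (Some (q, c)) (Inl (x, c1, c2)) = (if c = c1 then Some (\<delta> q x, c2) else None)"
  by (simp_all add: dstep_def)

lemma dstep_None [simp]: "foldl (dstep \<delta>) None ws = None"
  by (induction ws) auto

lemma word_eval_sub:
  assumes "subgroup H G" "\<forall>x\<in>set w. lab x \<in> H"
  shows "word_eval G lab w \<in> H"
  using assms(2) by (induction w) (auto intro: subgroup.m_closed[OF assms(1)] subgroup.one_closed[OF assms(1)])

lemma word_eval_carrier_upd: "word_eval (G\<lparr>carrier := H\<rparr>) lab w = word_eval G lab w"
  by (simp add: word_eval_def)

lemma dstep_fwd:
  assumes G: "group G" and labA: "\<forall>x\<in>A. lab x \<in> carrier G"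
  shows "set ws \<subseteq> Inl ` (A \<times> carrier G \<times> carrier G) \<union> Inr ` UNIV \<Longrightarrow> c \<in> carrier G \<Longrightarrow>
    foldl (dstep \<delta>) (Some (q, c)) ws = Some (q', c') \<Longrightarrow>
    \<exists>xs\<in>lists A. foldl \<delta> q xs = q' \<and> c' \<in> carrier G \<and>
      word_eval G (lab0 G lab) ws = inv\<^bsub>G\<^esub> c \<otimes>\<^bsub>G\<^esub> word_eval G lab xs \<otimes>\<^bsub>G\<^esub> c'"
proof (induction ws arbitrary: q c)
  case Nil
  interpret group G by (rule G)
  show ?case using Nil by (intro bexI[of _ "[]"]) auto
next
  case (Cons l ws)
  interpret group G by (rule G)
  show ?case
  proof (cases l)
    case (Inr y)
    then show ?thesis using Cons.prems(3) by simp
  next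
    case (Inl t)
    then obtain x c1 c2 where l: "l = Inl (x, c1, c2)" "x \<in> A" "c1 \<in> carrier G" "c2 \<in> carrier G"
      using Cons.prems(1) by auto
    have cc: "c = c1"
    proof (rule ccontr)
      assume "c \<noteq> c1"
      then show False using Cons.prems(3) l by simp
    qed
    have "foldl (dstep \<delta>) (Some (\<delta> q x, c2)) ws = Some (q', c')"
      using Cons.prems(3) l cc by simp
    then obtain xs where xs: "xs \<in> lists A" "foldl \<delta> (\<delta> q x) xs = q'" "c' \<in> carrier G"
      "word_eval G (lab0 G lab) ws = inv\<^bsub>G\<^esub> c2 \<otimes>\<^bsub>G\<^esub> word_eval G lab xs \<otimes>\<^bsub>G\<^esub> c'"
      using Cons.IH[of c2 "\<delta> q x"] Cons.prems(1) l by auto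
    have W: "word_eval G lab xs \<in> carrier G"
      using xs(1) labA by (intro word_eval_closed[OF is_monoid]) (auto simp: in_lists_conv_set)
    have lx: "lab x \<in> carrier G" using labA l by simp
    have canc: "c2 \<otimes>\<^bsub>G\<^esub> (inv\<^bsub>G\<^esub> c2 \<otimes>\<^bsub>G\<^esub> z) = z" if "z \<in> carrier G" for z
      using that l(4) by (simp add: m_assoc[symmetric])
    have "word_eval G (lab0 G lab) (l # ws) = (inv\<^bsub>G\<^esub> c \<otimes>\<^bsub>G\<^esub> lab x \<otimes>\<^bsub>G\<^esub> c2) \<otimes>\<^bsub>G\<^esub> (inv\<^bsub>G\<^esub> c2 \<otimes>\<^bsub>G\<^esub> word_eval G lab xs \<otimes>\<^bsub>G\<^esub> c')"
      using l cc xs(4) by (simp add: lab0_def)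
    also have "\<dots> = inv\<^bsub>G\<^esub> c \<otimes>\<^bsub>G\<^esub> word_eval G lab (x # xs) \<otimes>\<^bsub>G\<^esub> c'"
      using W lx l xs(3) cc canc by (simp add: m_assoc)
    finally show ?thesis using xs l by (intro bexI[of _ "x # xs"]) auto
  qed
qed



lemma dstep_idx:
  assumes G: "group G" and labA: "\<forall>x\<in>A. lab x \<in> carrier G"
    and wA: "w \<in> lists A" and cc: "\<forall>k\<le>length w. c k \<in> carrier G"
  shows "m \<le> length w \<Longrightarrow>
    foldl (dstep \<delta>) (Some (q, c 0)) (map (\<lambda>k. (Inl (w!k, c k, c (Suc k)) :: _ + 'a)) [0..<m]) = Some (foldl \<delta> q (take m w), c m)
    \<and> word_eval G (lab0 G lab) (map (\<lambda>k. (Inl (w!k, c k, c (Suc k)) :: _ + 'a)) [0..<m])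
       = inv\<^bsub>G\<^esub> (c 0) \<otimes>\<^bsub>G\<^esub> word_eval G lab (take m w) \<otimes>\<^bsub>G\<^esub> c m"
proof (induction m)
  case 0
  interpret group G by (rule G)
  show ?case using cc by simp
next
  case (Suc m)
  interpret group G by (rule G)
  have m: "m < length w" using Suc.prems by simp
  have mle: "m \<le> length w" using m by simp
  note IH = conjunct1[OF Suc.IH[OF mle]] conjunct2[OF Suc.IH[OF mle]]
  have tk: "take (Suc m) w = take m w @ [w ! m]" using m by (simp add: take_Suc_conv_app_nth)
  have wm: "w ! m \<in> A" using wA m by (simp add: in_lists_conv_set)
  have lx: "lab (w ! m) \<in> carrier G" using labA wm by simp
  have tA: "\<forall>x\<in>set (take m w). lab x \<in> carrier G"
    using wA labA by (auto simp: in_lists_conv_set dest: in_set_takeD)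
  have W: "word_eval G lab (take m w) \<in> carrier G" using tA by (rule word_eval_closed[OF is_monoid])
  have c0: "c 0 \<in> carrier G" and cm: "c m \<in> carrier G" and cs: "c (Suc m) \<in> carrier G"
    using cc m by auto
  have l0c: "\<forall>x\<in>set (map (\<lambda>k. (Inl (w!k, c k, c (Suc k)) :: _ + 'a)) [0..<m]). lab0 G lab x \<in> carrier G"
  proof
    fix x assume "x \<in> set (map (\<lambda>k. (Inl (w!k, c k, c (Suc k)) :: _ + 'a)) [0..<m])"
    then obtain k where k: "k < m" "x = (Inl (w!k, c k, c (Suc k)) :: _ + 'a)" by auto
    have "w ! k \<in> A" using wA k m by (simp add: in_lists_conv_set)
    then show "lab0 G lab x \<in> carrier G" using k cc m labA by (simp add: lab0_def)
  qed
  have we1: "word_eval G lab (take (Suc m) w) = word_eval G lab (take m w) \<otimes>\<^bsub>G\<^esub> lab (w ! m)"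
    using tk tA lx by (simp add: word_eval_append[OF is_monoid])
  have canc: "c m \<otimes>\<^bsub>G\<^esub> (inv\<^bsub>G\<^esub> (c m) \<otimes>\<^bsub>G\<^esub> z) = z" if "z \<in> carrier G" for z
    using that cm by (simp add: m_assoc[symmetric])
  have s1: "word_eval G (lab0 G lab) [Inl (w!m, c m, c (Suc m))] = inv\<^bsub>G\<^esub> (c m) \<otimes>\<^bsub>G\<^esub> lab (w!m) \<otimes>\<^bsub>G\<^esub> c (Suc m)"
    using lx cm cs by (simp add: lab0_def)
  have "word_eval G (lab0 G lab) (map (\<lambda>k. (Inl (w!k, c k, c (Suc k)) :: _ + 'a)) [0..<Suc m])
      = word_eval G (lab0 G lab) (map (\<lambda>k. (Inl (w!k, c k, c (Suc k)) :: _ + 'a)) [0..<m]) \<otimes>\<^bsub>G\<^esub>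
        word_eval G (lab0 G lab) [Inl (w!m, c m, c (Suc m))]"
    using l0c lx cm cs by (simp add: word_eval_append[OF is_monoid] lab0_def)
  also have "\<dots> = (inv\<^bsub>G\<^esub> (c 0) \<otimes>\<^bsub>G\<^esub> word_eval G lab (take m w) \<otimes>\<^bsub>G\<^esub> c m) \<otimes>\<^bsub>G\<^esub> (inv\<^bsub>G\<^esub> (c m) \<otimes>\<^bsub>G\<^esub> lab (w!m) \<otimes>\<^bsub>G\<^esub> c (Suc m))"
    by (simp only: IH(2) s1)
  also have "\<dots> = inv\<^bsub>G\<^esub> (c 0) \<otimes>\<^bsub>G\<^esub> word_eval G lab (take (Suc m) w) \<otimes>\<^bsub>G\<^esub> c (Suc m)"
    using we1 W lx c0 cm cs canc by (simp add: m_assoc)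
  finally show ?case using IH(1) tk by simp
qed



lemma word_eval_map: "word_eval G lab (map e ws) = word_eval G (lab \<circ> e) ws"
  by (induction ws) auto

lemma word_eval_cong: "\<forall>x\<in>set w. l1 x = l2 x \<Longrightarrow> word_eval G l1 w = word_eval G l2 w"
  by (induction w) auto

lemma foldr_closed:
  assumes "monoid G" "set l \<subseteq> carrier G"
  shows "foldr (\<otimes>\<^bsub>G\<^esub>) l \<one>\<^bsub>G\<^esub> \<in> carrier G"
  using assms(2) by (induction l) (auto intro: monoid.m_closed[OF assms(1)] monoid.one_closed[OF assms(1)])

lemma gen_words:
  assumes G: "group G" and Y: "Y \<subseteq> carrier G"
  shows "h \<in> generate G Y \<Longrightarrow> \<exists>ys\<in>lists (Y \<union> m_inv G ` Y). word_eval G (\<lambda>y. y) ys = h"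
proof (induction rule: generate.induct)
  case one
  then show ?case by (intro bexI[of _ "[]"]) auto
next
  case (incl h)
  then have "h \<in> carrier G" using Y by auto
  then show ?case using incl by (intro bexI[of _ "[h]"]) (auto simp: group.is_monoid[OF G] monoid.r_one[OF group.is_monoid[OF G]])
next
  case (inv h)
  then have "inv\<^bsub>G\<^esub> h \<in> carrier G" using Y G by (auto intro: group.inv_closed)
  then show ?case using inv by (intro bexI[of _ "[inv\<^bsub>G\<^esub> h]"]) (auto simp: monoid.r_one[OF group.is_monoid[OF G]])
next
  case (eng h1 h2)
  then obtain ys1 ys2 where y: "ys1 \<in> lists (Y \<union> m_inv G ` Y)" "word_eval G (\<lambda>y. y) ys1 = h1"
    "ys2 \<in> lists (Y \<union> m_inv G ` Y)" "word_eval G (\<lambda>y. y) ys2 = h2" by blast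
  have YY: "Y \<union> m_inv G ` Y \<subseteq> carrier G" using Y G by (auto intro: group.inv_closed)
  have "word_eval G (\<lambda>y. y) (ys1 @ ys2) = h1 \<otimes>\<^bsub>G\<^esub> h2"
  proof (subst word_eval_append[OF group.is_monoid[OF G]])
    show "\<forall>x\<in>set ys1. x \<in> carrier G" using y(1) YY by (auto simp: in_lists_conv_set)
    show "\<forall>x\<in>set ys2. x \<in> carrier G" using y(3) YY by (auto simp: in_lists_conv_set)
  qed (use y in simp)
  then show ?case using y by (intro bexI[of _ "ys1 @ ys2"]) auto
qed



lemma part2:
  fixes G :: "('a, 'b) monoid_scheme" and A :: "'x set" and lab :: "'x \<Rightarrow> 'a"
    and H P Y :: "'a set" and L :: "'x list set" and Rn :: nat
  assumes G: "group G" and fg: "fin_gen_set G A lab" and sub: "subgroup H G"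
    and inf: "infinite (UNIV :: 'a set)"
    and Yf: "finite Y" and YH: "Y \<subseteq> H" and Ygen: "generate G Y = H"
    and reg: "regular_lang A L" and LP: "word_eval G lab ` L = P"
    and conv: "\<forall>w\<in>L. word_eval G lab w \<in> H \<longrightarrow>
           (\<forall>i\<le>length w. \<exists>h\<in>H. word_dist G A lab (word_eval G lab (take i w)) h \<le> Rn)"
  shows "regular_left_order (G\<lparr>carrier := H\<rparr>) (P \<inter> H)"
proof -
  interpret group G by (rule G)
  have labA: "\<forall>x\<in>A. lab x \<in> carrier G" and fA: "finite A" and gen: "word_eval G lab ` lists A = carrier G"
    using fg unfolding fin_gen_set_def by auto
  have Hc: "H \<subseteq> carrier G" using sub by (rule subgroup.subset)
  obtain Q :: "nat set" and q0 \<delta> F where dfa: "finite Q" "q0 \<in> Q" "\<forall>q\<in>Q. \<forall>x\<in>A. \<delta> q x \<in> Q"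
    "F \<subseteq> Q" "L = {w \<in> lists A. foldl \<delta> q0 w \<in> F}"
    using reg unfolding regular_lang_def by blast
  define S where "S = lab ` A \<union> m_inv G ` lab ` A"
  have fS: "finite S" unfolding S_def using fA by simp
  have Sc: "S \<subseteq> carrier G" unfolding S_def using labA by auto
  define Ball where "Ball = (\<lambda>l. foldr (\<otimes>\<^bsub>G\<^esub>) l \<one>\<^bsub>G\<^esub>) ` {l. set l \<subseteq> S \<and> length l \<le> Rn}"
  have fBall: "finite Ball" unfolding Ball_def using finite_lists_length_le[OF fS] by simp
  have Ballc: "Ball \<subseteq> carrier G" unfolding Ball_def using Sc foldr_closed[OF is_monoid] by blast
  have oneB: "\<one>\<^bsub>G\<^esub> \<in> Ball" unfolding Ball_def by (rule image_eqI[of _ _ "[]"]) auto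
  have distB: "inv\<^bsub>G\<^esub> g \<otimes>\<^bsub>G\<^esub> h \<in> Ball" if gh: "g \<in> carrier G" "h \<in> carrier G" "word_dist G A lab g h \<le> Rn" for g h
  proof -
    obtain l where l: "l \<in> lists S" "length l = word_dist G A lab g h"
      "foldr (\<otimes>\<^bsub>G\<^esub>) l \<one>\<^bsub>G\<^esub> = inv\<^bsub>G\<^esub> g \<otimes>\<^bsub>G\<^esub> h"
      using word_dist_witness[OF G fg gh(1,2)] unfolding S_def by blast
    show ?thesis unfolding Ball_def using l gh(3) by (intro image_eqI[of _ _ l]) (auto simp: in_lists_conv_set)
  qed
  define T where "T = {(x, c, c'). x \<in> A \<and> c \<in> Ball \<and> c' \<in> Ball \<and> inv\<^bsub>G\<^esub> c \<otimes>\<^bsub>G\<^esub> lab x \<otimes>\<^bsub>G\<^esub> c' \<in> H}"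
  have fT: "finite T"
    by (rule finite_subset[of _ "A \<times> Ball \<times> Ball"]) (auto simp: T_def fA fBall)
  define Yg2 where "Yg2 = Y \<union> m_inv G ` Y"
  have Yg2H: "Yg2 \<subseteq> H" unfolding Yg2_def using YH sub by (auto intro: subgroup.m_inv_closed)
  define Sig :: "(('x \<times> 'a \<times> 'a) + 'a) set" where "Sig = Inl ` T \<union> Inr ` Yg2"
  have fSig: "finite Sig" unfolding Sig_def Yg2_def using fT Yf by simp
  have SigH: "lab0 G lab l \<in> H" if "l \<in> Sig" for l
    using that Yg2H unfolding Sig_def T_def by (auto simp: lab0_def)
  have Sigform: "Sig \<subseteq> Inl ` (A \<times> carrier G \<times> carrier G) \<union> Inr ` UNIV"
    unfolding Sig_def T_def using Ballc by auto
  define Q' where "Q' = insert None (Some ` (Q \<times> Ball))"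
  define q0' where "q0' = Some (q0, \<one>\<^bsub>G\<^esub>)"
  define F' where "F' = Some ` (F \<times> {\<one>\<^bsub>G\<^esub>})"
  define M0 where "M0 = {ws \<in> lists Sig. foldl (dstep \<delta>) q0' ws \<in> F'}"
  have fQ': "finite Q'" unfolding Q'_def using dfa(1) fBall by simp
  have q0Q: "q0' \<in> Q'" unfolding q0'_def Q'_def using dfa(2) oneB by simp
  have FQ: "F' \<subseteq> Q'" unfolding F'_def Q'_def using dfa(4) oneB by auto
  have clos: "\<forall>s\<in>Q'. \<forall>l\<in>Sig. dstep \<delta> s l \<in> Q'"
  proof (intro ballI)
    fix s l assume s: "s \<in> Q'" and l: "l \<in> Sig"
    show "dstep \<delta> s l \<in> Q'"
    proof (cases s)
      case None then show ?thesis by (simp add: Q'_def)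
    next
      case (Some p)
      then obtain q c where p: "s = Some (q, c)" "q \<in> Q" "c \<in> Ball" using s unfolding Q'_def by auto
      show ?thesis
      proof (cases l)
        case (Inl t)
        then obtain x c1 c2 where t: "l = Inl (x, c1, c2)" "x \<in> A" "c2 \<in> Ball"
          using l unfolding Sig_def T_def by auto
        then show ?thesis using p dfa(3) unfolding Q'_def by auto
      next
        case (Inr y) then show ?thesis using p by (simp add: Q'_def)
      qed
    qed
  qed
  have img0: "word_eval G (lab0 G lab) ` M0 = P \<inter> H"
  proof
    show "word_eval G (lab0 G lab) ` M0 \<subseteq> P \<inter> H"
    proof
      fix p assume "p \<in> word_eval G (lab0 G lab) ` M0"
      then obtain ws where ws: "ws \<in> lists Sig" "foldl (dstep \<delta>) q0' ws \<in> F'" "p = word_eval G (lab0 G lab) ws"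
        unfolding M0_def by blast
      then obtain qf where qf: "qf \<in> F" "foldl (dstep \<delta>) (Some (q0, \<one>\<^bsub>G\<^esub>)) ws = Some (qf, \<one>\<^bsub>G\<^esub>)"
        unfolding F'_def q0'_def by auto
      have "set ws \<subseteq> Inl ` (A \<times> carrier G \<times> carrier G) \<union> Inr ` UNIV" using ws(1) Sigform by auto
      then obtain xs where xs: "xs \<in> lists A" "foldl \<delta> q0 xs = qf"
        "word_eval G (lab0 G lab) ws = inv\<^bsub>G\<^esub> \<one>\<^bsub>G\<^esub> \<otimes>\<^bsub>G\<^esub> word_eval G lab xs \<otimes>\<^bsub>G\<^esub> \<one>\<^bsub>G\<^esub>"
        using dstep_fwd[OF G labA _ _ qf(2)] by auto
      have "word_eval G lab xs \<in> carrier G"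
        using xs(1) labA by (intro word_eval_closed[OF is_monoid]) (auto simp: in_lists_conv_set)
      then have "p = word_eval G lab xs" using xs(3) ws(3) by simp
      moreover have "xs \<in> L" using xs qf(1) dfa(5) by simp
      ultimately have "p \<in> P" using LP by blast
      moreover have "p \<in> H" unfolding ws(3) using ws(1) SigH
        by (intro word_eval_sub[OF sub]) (auto simp: in_lists_conv_set)
      ultimately show "p \<in> P \<inter> H" by simp
    qed
  next
    show "P \<inter> H \<subseteq> word_eval G (lab0 G lab) ` M0"
    proof
      fix p assume p: "p \<in> P \<inter> H"
      then obtain w where w: "w \<in> L" "word_eval G lab w = p" using LP by blast
      have wA: "w \<in> lists A" using w(1) dfa(5) by simp
      define n where "n = length w"
      define g where "g i = word_eval G lab (take i w)" for i
      have gc: "g i \<in> carrier G" for i unfolding g_def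
        using wA labA by (intro word_eval_closed[OF is_monoid]) (auto simp: in_lists_conv_set dest: in_set_takeD)
      have wH: "word_eval G lab w \<in> H" using w(2) p by simp
      have exc: "\<exists>c. c \<in> Ball \<and> g i \<otimes>\<^bsub>G\<^esub> c \<in> H" if iN: "i \<le> n" for i
      proof -
        have "i \<le> length w" using iN n_def by simp
        from conv[rule_format, OF w(1) wH this]
        obtain h where h: "h \<in> H" "word_dist G A lab (g i) h \<le> Rn"
          unfolding g_def by blast
        have hc: "h \<in> carrier G" using h Hc by auto
        have "g i \<otimes>\<^bsub>G\<^esub> (inv\<^bsub>G\<^esub> (g i) \<otimes>\<^bsub>G\<^esub> h) = h" using gc hc by (simp add: m_assoc[symmetric])
        then have "g i \<otimes>\<^bsub>G\<^esub> (inv\<^bsub>G\<^esub> (g i) \<otimes>\<^bsub>G\<^esub> h) \<in> H" using h(1) by simp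
        then show ?thesis using distB[OF gc hc h(2)] by blast
      qed
      define c where "c i = (if i = 0 \<or> i = n then \<one>\<^bsub>G\<^esub> else (SOME c. c \<in> Ball \<and> g i \<otimes>\<^bsub>G\<^esub> c \<in> H))" for i
      have g0: "g 0 = \<one>\<^bsub>G\<^esub>" unfolding g_def by simp
      have gn: "g n = p" unfolding g_def n_def using w by simp
      have cprop: "c i \<in> Ball \<and> g i \<otimes>\<^bsub>G\<^esub> c i \<in> H" if "i \<le> n" for i
      proof (cases "i = 0 \<or> i = n")
        case True
        then have "g i \<in> H" using g0 gn p subgroup.one_closed[OF sub] by auto
        then show ?thesis using True oneB gc unfolding c_def by simp
      next
        case False
        then show ?thesis unfolding c_def using someI_ex[OF exc[OF that]] by presburger
      qed
      have cc: "\<forall>k\<le>length w. c k \<in> carrier G" using cprop Ballc n_def by blast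
      define ws where "ws = map (\<lambda>k. (Inl (w!k, c k, c (Suc k)) :: _ + 'a)) [0..<n]"
      have key: "foldl (dstep \<delta>) (Some (q0, c 0)) ws = Some (foldl \<delta> q0 (take n w), c n)
        \<and> word_eval G (lab0 G lab) ws = inv\<^bsub>G\<^esub> (c 0) \<otimes>\<^bsub>G\<^esub> word_eval G lab (take n w) \<otimes>\<^bsub>G\<^esub> c n"
        unfolding ws_def by (rule dstep_idx[OF G labA wA cc]) (simp add: n_def)
      have c0: "c 0 = \<one>\<^bsub>G\<^esub>" and cn: "c n = \<one>\<^bsub>G\<^esub>" unfolding c_def by auto
      have wsSig: "ws \<in> lists Sig"
      proof -
        have "(w!k, c k, c (Suc k)) \<in> T" if k: "k < n" for k
        proof -
          have wk: "w ! k \<in> A" using wA k n_def by (simp add: in_lists_conv_set)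
          have ck: "c k \<in> Ball" "g k \<otimes>\<^bsub>G\<^esub> c k \<in> H" using cprop k by auto
          have cs: "c (Suc k) \<in> Ball" "g (Suc k) \<otimes>\<^bsub>G\<^esub> c (Suc k) \<in> H" using cprop k by auto
          have gs: "g (Suc k) = g k \<otimes>\<^bsub>G\<^esub> lab (w ! k)"
          proof -
            have "take (Suc k) w = take k w @ [w ! k]" using k n_def by (simp add: take_Suc_conv_app_nth)
            moreover have "\<forall>x\<in>set (take k w). lab x \<in> carrier G"
              using wA labA by (auto simp: in_lists_conv_set dest: in_set_takeD)
            ultimately show ?thesis unfolding g_def using labA wk
              by (simp add: word_eval_append[OF is_monoid] monoid.r_one[OF is_monoid])
          qed
          have ckc: "c k \<in> carrier G" "c (Suc k) \<in> carrier G" using ck(1) cs(1) Ballc by auto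
          have lk: "lab (w ! k) \<in> carrier G" using labA wk by simp
          have "inv\<^bsub>G\<^esub> (g k \<otimes>\<^bsub>G\<^esub> c k) \<otimes>\<^bsub>G\<^esub> (g (Suc k) \<otimes>\<^bsub>G\<^esub> c (Suc k)) \<in> H"
            using ck(2) cs(2) sub by (auto intro: subgroup.m_closed subgroup.m_inv_closed)
          moreover have "inv\<^bsub>G\<^esub> (g k \<otimes>\<^bsub>G\<^esub> c k) \<otimes>\<^bsub>G\<^esub> (g (Suc k) \<otimes>\<^bsub>G\<^esub> c (Suc k))
              = inv\<^bsub>G\<^esub> (c k) \<otimes>\<^bsub>G\<^esub> lab (w ! k) \<otimes>\<^bsub>G\<^esub> c (Suc k)"
          proof -
            have "inv\<^bsub>G\<^esub> (g k \<otimes>\<^bsub>G\<^esub> c k) \<otimes>\<^bsub>G\<^esub> (g (Suc k) \<otimes>\<^bsub>G\<^esub> c (Suc k))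
                = inv\<^bsub>G\<^esub> (c k) \<otimes>\<^bsub>G\<^esub> (inv\<^bsub>G\<^esub> (g k) \<otimes>\<^bsub>G\<^esub> (g k \<otimes>\<^bsub>G\<^esub> (lab (w ! k) \<otimes>\<^bsub>G\<^esub> c (Suc k))))"
              using gs gc ckc lk by (simp add: inv_mult_group m_assoc)
            also have "\<dots> = inv\<^bsub>G\<^esub> (c k) \<otimes>\<^bsub>G\<^esub> (lab (w ! k) \<otimes>\<^bsub>G\<^esub> c (Suc k))"
              using gc ckc lk by (simp add: m_assoc[symmetric])
            finally show ?thesis using ckc lk by (simp add: m_assoc)
          qed
          ultimately show ?thesis unfolding T_def using wk ck(1) cs(1) by simp
        qed
        then show ?thesis unfolding ws_def Sig_def by auto
      qed
      have tn: "take n w = w" unfolding n_def by simp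
      have "foldl (dstep \<delta>) q0' ws \<in> F'"
        using key c0 cn tn w(1) dfa(5) unfolding q0'_def F'_def by simp
      then have "ws \<in> M0" unfolding M0_def using wsSig by simp
      moreover have "word_eval G (lab0 G lab) ws = p"
        using key c0 cn tn w(2) gc[of n] gn by simp
      ultimately show "p \<in> word_eval G (lab0 G lab) ` M0" by (metis imageI)
    qed
  qed
  obtain g0 :: "('x \<times> 'a \<times> 'a) + 'a \<Rightarrow> nat" and n0 where "g0 ` Sig = {i. i < n0} \<and> inj_on g0 Sig"
    using finite_imp_inj_to_nat_seg[OF fSig] by auto
  then have g0: "inj_on g0 Sig" by simp
  obtain j :: "nat \<Rightarrow> 'a" where j: "inj j" using infinite_countable_subset[OF inf] by auto
  define e where "e = j \<circ> g0"
  have inje: "inj_on e Sig" unfolding e_def using g0 j by (simp add: comp_inj_on inj_on_subset)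
  define d where "d = inv_into Sig e"
  have de: "d (e l) = l" if "l \<in> Sig" for l unfolding d_def using inje that by (simp add: inv_into_f_f)
  define Y' where "Y' = e ` Sig"
  define lab' where "lab' y = lab0 G lab (d y)" for y
  define M where "M = map e ` M0"
  define d1 where "d1 s y = dstep \<delta> s (d y)" for s y
  have dY: "d y \<in> Sig" if "y \<in> Y'" for y using that unfolding Y'_def d_def by (simp add: inv_into_into)
  have edY: "e (d y) = y" if "y \<in> Y'" for y using that unfolding Y'_def d_def by (simp add: f_inv_into_f)
  have we_map: "word_eval G lab' (map e ws) = word_eval G (lab0 G lab) ws" if "ws \<in> lists Sig" for ws
    unfolding word_eval_map using that de by (intro word_eval_cong) (auto simp: lab'_def in_lists_conv_set)
  have fo_map: "foldl d1 s (map e ws) = foldl (dstep \<delta>) s ws" if "ws \<in> lists Sig" for ws s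
    using that by (induction ws arbitrary: s) (auto simp: d1_def de)
  have fgH: "fin_gen_set (G\<lparr>carrier := H\<rparr>) Y' lab'"
    unfolding fin_gen_set_def
  proof (intro conjI)
    show "finite Y'" unfolding Y'_def using fSig by simp
    show "lab' ` Y' \<subseteq> carrier (G\<lparr>carrier := H\<rparr>)" using dY SigH by (auto simp: lab'_def)
    show "word_eval (G\<lparr>carrier := H\<rparr>) lab' ` lists Y' = carrier (G\<lparr>carrier := H\<rparr>)"
    proof -
      have "word_eval G lab' ` lists Y' = H"
    proof (intro equalityI subsetI)
      fix h assume "h \<in> word_eval G lab' ` lists Y'"
      then obtain ys where ys: "ys \<in> lists Y'" "h = word_eval G lab' ys" by blast
      show "h \<in> H" unfolding ys(2) using ys(1) dY SigH
        by (intro word_eval_sub[OF sub]) (auto simp: lab'_def in_lists_conv_set)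
    next
      fix h assume "h \<in> H"
      then have "h \<in> generate G Y" using Ygen by simp
      then obtain ys where ys: "ys \<in> lists Yg2" "word_eval G (\<lambda>y. y) ys = h"
        using gen_words[OF G] YH Hc unfolding Yg2_def by blast
      have ws: "map Inr ys \<in> lists Sig" using ys(1) unfolding Sig_def by auto
      have "word_eval G lab' (map e (map Inr ys)) = word_eval G (lab0 G lab) (map Inr ys)"
        by (rule we_map[OF ws])
      also have "\<dots> = h" unfolding word_eval_map using ys(2) by (simp add: lab0_def comp_def)
      finally show "h \<in> word_eval G lab' ` lists Y'"
        using ws unfolding Y'_def by (intro image_eqI[of _ _ "map e (map Inr ys)"]) auto
    qed
      then show ?thesis by (simp add: word_eval_carrier_upd)
    qed
  qed
  have regM: "regular_lang Y' M"
  proof (rule reg_of_dfa[OF fQ' q0Q _ FQ])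
    show "\<forall>q\<in>Q'. \<forall>x\<in>Y'. d1 q x \<in> Q'" using clos dY by (simp add: d1_def)
    show "M = {w \<in> lists Y'. foldl d1 q0' w \<in> F'}"
    proof (intro equalityI subsetI)
      fix ys assume "ys \<in> M"
      then obtain ws where ws: "ws \<in> M0" "ys = map e ws" unfolding M_def by blast
      then show "ys \<in> {w \<in> lists Y'. foldl d1 q0' w \<in> F'}"
        using fo_map[of ws q0'] unfolding M0_def Y'_def by auto
    next
      fix ys assume ys: "ys \<in> {w \<in> lists Y'. foldl d1 q0' w \<in> F'}"
      define ws where "ws = map d ys"
      have ws1: "ws \<in> lists Sig" unfolding ws_def using ys dY by auto
      have ws2: "map e ws = ys" unfolding ws_def using ys edY by (simp add: map_idI in_lists_conv_set)
      have "foldl (dstep \<delta>) q0' ws \<in> F'" using fo_map[OF ws1, of q0'] ws2 ys by simp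
      then have "ws \<in> M0" unfolding M0_def using ws1 by simp
      then show "ys \<in> M" unfolding M_def using ws2 by blast
    qed
  qed
  have imgM: "word_eval (G\<lparr>carrier := H\<rparr>) lab' ` M = P \<inter> H"
  proof -
    have "word_eval (G\<lparr>carrier := H\<rparr>) lab' ` M = word_eval G (lab0 G lab) ` M0"
      unfolding M_def word_eval_carrier_upd image_image
      using we_map unfolding M0_def by (intro image_cong) auto
    then show ?thesis using img0 by simp
  qed
  show ?thesis unfolding regular_left_order_def using fgH regM imgM by blast
qed


theorem proposition4p3:
  fixes G :: "('a, 'b) monoid_scheme"
    and A :: "'x set" and lab :: "'x \<Rightarrow> 'a"
    and H :: "'a set" and f :: "'a \<Rightarrow> int"
    and P PH :: "'a set" and PZ :: "int set" and L :: "'x list set"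
  assumes "group G"
    and "fin_gen_set G A lab"
    and "f \<in> hom G integer_group" and "f ` carrier G = UNIV"
    and "kernel G integer_group f = H"
    and "positive_cone G P"
    and "positive_cone integer_group PZ"
    and "positive_cone (G\<lparr>carrier := H\<rparr>) PH"
    and "P = {g \<in> carrier G. f g \<in> PZ} \<union> PH"
    and "regular_lang A L"
    and "word_eval G lab ` L = P"
    and "\<exists>Y. finite Y \<and> Y \<subseteq> H \<and> generate G Y = H"
  shows "language_convex G A lab L H \<and> regular_left_order (G\<lparr>carrier := H\<rparr>) (P \<inter> H)"
proof -
  have PHH: "PH \<subseteq> H" using assms(8) unfolding positive_cone_def by simp
  obtain Rn :: nat where Rn: "\<forall>w\<in>L. word_eval G lab w \<in> H \<longrightarrow>
           (\<forall>i\<le>length w. \<exists>h\<in>H. word_dist G A lab (word_eval G lab (take i w)) h \<le> Rn)"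
    using conv_core[OF assms(1,2,3,4,5,7) PHH assms(9,10,11)] by blast
  have lc: "language_convex G A lab L H"
    unfolding language_convex_def
  proof (intro exI[of _ "real Rn"] conjI ballI impI allI)
    fix w i assume "w \<in> L" "word_eval G lab w \<in> H" "i \<le> length w"
    then obtain h where "h \<in> H" "word_dist G A lab (word_eval G lab (take i w)) h \<le> Rn"
      using Rn by blast
    then show "\<exists>h\<in>H. real (word_dist G A lab (word_eval G lab (take i w)) h) \<le> real Rn" by auto
  qed simp
  have gh: "group_hom G integer_group f" using assms(1,3) by (simp add: group_hom_def group_hom_axioms_def)
  have sub: "subgroup H G" using group_hom.subgroup_kernel[OF gh] assms(5) by simp
  have inf: "infinite (UNIV :: 'a set)"
  proof
    assume "finite (UNIV :: 'a set)"
    then have "finite (carrier G)" using finite_subset[of "carrier G" UNIV] by blast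
    then have "finite (f ` carrier G)" by (rule finite_imageI)
    then show False using assms(4) by simp
  qed
  obtain Y where Y: "finite Y" "Y \<subseteq> H" "generate G Y = H" using assms(12) by blast
  have "regular_left_order (G\<lparr>carrier := H\<rparr>) (P \<inter> H)"
    by (rule part2[OF assms(1,2) sub inf Y assms(10,11) Rn])
  then show ?thesis using lc by simp
qed

end
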